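(* Let $P$ be a Poisson tensor on $\mathbb{R}^3$, let $H\in C^\infty(\mathbb{R}^3)$, let $S\in C^\infty(\mathbb{R}^3)$ satisfy $PdS=0$, and let $g$ be the symmetric tensor with components $g^{ij}=H^iH^j-\delta^{ij}\sum_k H^kH^k$. If $x$ is a regular point of $P$ (i.e. $P(x)\neq 0$) with $d_xS\neq 0$, then $x$ is an equilibrium point of the system $\dot{x}=PdH+gdS$ if and only if $x$ is an equilibrium of the gradient system $\dot{x}=gdS$.
   Context: $\mathbb{R}^3$ carries the standard Euclidean metric, used to identify tangent and cotangent spaces with $\mathbb{R}^3$; $H^i=H_i=\partial H/\partial x^i$. A Poisson tensor is a skew-symmetric bivector field satisfying the Jacobi identity. *)

theory Defs
  imports "HOL-Analysis.Analysis"
begin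

definition partial :: "3 \<Rightarrow> (real^3 \<Rightarrow> real) \<Rightarrow> real^3 \<Rightarrow> real" where
  "partial i f x = frechet_derivative f (at x) (axis i 1)"

fun iter_partial :: "3 list \<Rightarrow> (real^3 \<Rightarrow> real) \<Rightarrow> real^3 \<Rightarrow> real" where
  "iter_partial [] f = f"
| "iter_partial (i # is) f = partial i (iter_partial is f)"

definition smooth :: "(real^3 \<Rightarrow> real) \<Rightarrow> bool" where
  "smooth f \<longleftrightarrow> (\<forall>is x. iter_partial is f differentiable (at x))"

text \<open>Gradient (= differential dS under the Euclidean identification).\<close>
definition grad :: "(real^3 \<Rightarrow> real) \<Rightarrow> real^3 \<Rightarrow> real^3" where
  "grad f x = (\<chi> i. partial i f x)"

text \<open>Poisson tensor: smooth skew-symmetric bivector field satisfying the Jacobi identity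
  (P x $ i $ j is the component P^{ij} at x).\<close>
definition poisson_tensor :: "(real^3 \<Rightarrow> real^3^3) \<Rightarrow> bool" where
  "poisson_tensor P \<longleftrightarrow>
     (\<forall>i j. smooth (\<lambda>y. P y $ i $ j)) \<and>
     (\<forall>x i j. P x $ i $ j = - P x $ j $ i) \<and>
     (\<forall>x i j k.
        (\<Sum>l\<in>UNIV. P x $ i $ l * partial l (\<lambda>y. P y $ j $ k) x
                 + P x $ j $ l * partial l (\<lambda>y. P y $ k $ i) x
                 + P x $ k $ l * partial l (\<lambda>y. P y $ i $ j) x) = 0)"

definition gtensor :: "(real^3 \<Rightarrow> real) \<Rightarrow> real^3 \<Rightarrow> real^3^3" where
  "gtensor H x = (\<chi> i j. partial i H x * partial j H x
                   - (if i = j then 1 else 0) * (\<Sum>k\<in>UNIV. partial k H x * partial k H x))"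

end

theory Submission
  imports Defs
begin

lemma core:
  fixes m1 m2 m3 s1 s2 s3 h1 h2 h3 hsx hhx a1 a2 a3 b1 b2 b3 :: real
  assumes hsx_def: "hsx = h1* s1 + h2* s2 + h3* s3" and hhx_def: "hhx = h1*h1 + h2*h2 + h3*h3"
  and a1_def: "a1 = m1*h2 + m2*h3" and a2_def: "a2 = -m1*h1 + m3*h3" and a3_def: "a3 = -m2*h1 - m3*h2"
  and b1_def: "b1 = h1*hsx - s1*hhx" and b2_def: "b2 = h2*hsx - s2*hhx" and b3_def: "b3 = h3*hsx - s3*hhx"
  and k1: "m1* s2 + m2* s3 = 0" and k2: "-m1* s1 + m3* s3 = 0" and k3: "-m2* s1 - m3* s2 = 0"
    and sn: "s1 \<noteq> 0 \<or> s2 \<noteq> 0 \<or> s3 \<noteq> 0"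
  shows "(a1 + b1 = 0 \<and> a2 + b2 = 0 \<and> a3 + b3 = 0) \<longleftrightarrow> (b1 = 0 \<and> b2 = 0 \<and> b3 = 0)"
proof
  have ah: "a1*h1 + a2*h2 + a3*h3 = 0" unfolding a1_def a2_def a3_def by algebra
  have as: "a1* s1 + a2* s2 + a3* s3 = - (h1*(m1* s2 + m2* s3) + h2*(-m1* s1 + m3* s3) + h3*(-m2* s1 - m3* s2))"
    unfolding a1_def a2_def a3_def by algebra
  hence as0: "a1* s1 + a2* s2 + a3* s3 = 0" using k1 k2 k3 by simp
  have ab: "a1*b1 + a2*b2 + a3*b3 = hsx*(a1*h1 + a2*h2 + a3*h3) - hhx*(a1* s1 + a2* s2 + a3* s3)"
    unfolding b1_def b2_def b3_def by algebra
  hence ab0: "a1*b1 + a2*b2 + a3*b3 = 0" using ah as0 by simp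
  assume e: "a1 + b1 = 0 \<and> a2 + b2 = 0 \<and> a3 + b3 = 0"
  hence "a1*a1 + a2*a2 + a3*a3 = 0" using ab0
    by (smt (verit) mult_minus_right)
  moreover have "a1*a1 \<ge> 0" "a2*a2 \<ge> 0" "a3*a3 \<ge> 0" by simp_all
  ultimately have "a1*a1 = 0" "a2*a2 = 0" "a3*a3 = 0" by linarith+
  hence "a1 = 0 \<and> a2 = 0 \<and> a3 = 0" by simp
  thus "b1 = 0 \<and> b2 = 0 \<and> b3 = 0" using e by simp
next
  assume b: "b1 = 0 \<and> b2 = 0 \<and> b3 = 0"
  show "a1 + b1 = 0 \<and> a2 + b2 = 0 \<and> a3 + b3 = 0"
  proof (cases "hhx = 0")
    case True
    moreover have "h1*h1 \<ge> 0" "h2*h2 \<ge> 0" "h3*h3 \<ge> 0" by simp_all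
    ultimately have "h1*h1 = 0" "h2*h2 = 0" "h3*h3 = 0" unfolding hhx_def by linarith+
    hence "h1 = 0 \<and> h2 = 0 \<and> h3 = 0" by simp
    thus ?thesis using b unfolding a1_def a2_def a3_def by simp
  next
    case False
    have hsx0: "hsx \<noteq> 0"
    proof
      assume "hsx = 0"
      hence "s1*hhx = 0 \<and> s2*hhx = 0 \<and> s3*hhx = 0" using b unfolding b1_def b2_def b3_def by simp
      thus False using False sn by simp
    qed
    define c where "c = hhx / hsx"
    have hi: "h1 = c* s1 \<and> h2 = c* s2 \<and> h3 = c* s3"
      using b hsx0 unfolding c_def b1_def b2_def b3_def by (simp add: field_simps)
    have "a1 = c*(m1* s2 + m2* s3) \<and> a2 = c*(-m1* s1 + m3* s3) \<and> a3 = c*(-m2* s1 - m3* s2)"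
      unfolding a1_def a2_def a3_def using hi by (simp add: algebra_simps)
    thus ?thesis using k1 k2 k3 b by simp
  qed
qed

theorem mainTheorem9:
  fixes P :: "real^3 \<Rightarrow> real^3^3" and H S :: "real^3 \<Rightarrow> real" and x :: "real^3"
  assumes "poisson_tensor P"
    and "smooth H" and "smooth S"
    and "\<forall>y. P y *v grad S y = 0"
    and "P x \<noteq> 0"
    and "grad S x \<noteq> 0"
  shows "(P x *v grad H x + gtensor H x *v grad S x = 0) \<longleftrightarrow> (gtensor H x *v grad S x = 0)"
proof -
  have sk: "\<And>i j. P x $ i $ j = - P x $ j $ i" using assms(1) unfolding poisson_tensor_def by blast
  have d: "\<And>i. P x $ i $ i = 0" using sk by (metis add.inverse_unique add_eq_0_iff2 equal_neg_zero)
  have k: "P x *v grad S x = 0" using assms(4) by blast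
  have sn: "grad S x $ 1 \<noteq> 0 \<or> grad S x $ 2 \<noteq> 0 \<or> grad S x $ 3 \<noteq> 0"
    using assms(6) by (simp add: vec_eq_iff forall_3)
  have g: "gtensor H x = (\<chi> i j. grad H x $ i * grad H x $ j
                   - (if i = j then 1 else 0) * (\<Sum>k\<in>UNIV. grad H x $ k * grad H x $ k))"
    unfolding gtensor_def grad_def by simp
  note sk21 = sk[of 2 1] and sk31 = sk[of 3 1] and sk32 = sk[of 3 2]
  from k have k': "P x $ 1 $ 2 * grad S x $ 2 + P x $ 1 $ 3 * grad S x $ 3 = 0"
     "- P x $ 1 $ 2 * grad S x $ 1 + P x $ 2 $ 3 * grad S x $ 3 = 0"
     "- P x $ 1 $ 3 * grad S x $ 1 - P x $ 2 $ 3 * grad S x $ 2 = 0"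
    by (simp_all add: vec_eq_iff forall_3 matrix_vector_mult_def sum_3 d sk21 sk31 sk32)
  define h1 h2 h3 where "h1 = grad H x $ 1" and "h2 = grad H x $ 2" and "h3 = grad H x $ 3"
  define s1 s2 s3 where "s1 = grad S x $ 1" and "s2 = grad S x $ 2" and "s3 = grad S x $ 3"
  define m1 m2 m3 where "m1 = P x $ 1 $ 2" and "m2 = P x $ 1 $ 3" and "m3 = P x $ 2 $ 3"
  define hsx where "hsx = h1 * s1 + h2 * s2 + h3 * s3"
  define hhx where "hhx = h1*h1 + h2*h2 + h3*h3"
  have gs: "gtensor H x *v grad S x = vector [h1*hsx - s1*hhx, h2*hsx - s2*hhx, h3*hsx - s3*hhx]"
    unfolding g by (simp add: vec_eq_iff forall_3 matrix_vector_mult_def sum_3 h1_def h2_def h3_def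
       s1_def s2_def s3_def hsx_def hhx_def algebra_simps)
  have ph: "P x *v grad H x = vector [m1*h2 + m2*h3, -m1*h1 + m3*h3, -m2*h1 - m3*h2]"
    by (simp add: vec_eq_iff forall_3 matrix_vector_mult_def sum_3 h1_def h2_def h3_def
       m1_def m2_def m3_def d sk21 sk31 sk32 algebra_simps)
  have c: "(m1*h2 + m2*h3 + (h1*hsx - s1*hhx) = 0 \<and> -m1*h1 + m3*h3 + (h2*hsx - s2*hhx) = 0 \<and> -m2*h1 - m3*h2 + (h3*hsx - s3*hhx) = 0)
     \<longleftrightarrow> (h1*hsx - s1*hhx = 0 \<and> h2*hsx - s2*hhx = 0 \<and> h3*hsx - s3*hhx = 0)"
  proof -
    have kk: "m1* s2 + m2* s3 = 0" "-m1* s1 + m3* s3 = 0" "-m2* s1 - m3* s2 = 0"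
      using k' by (simp_all add: m1_def m2_def m3_def s1_def s2_def s3_def)
    have ss: "s1 \<noteq> 0 \<or> s2 \<noteq> 0 \<or> s3 \<noteq> 0" using sn by (simp add: s1_def s2_def s3_def)
    show ?thesis using core[OF hsx_def hhx_def refl refl refl refl refl refl kk ss] .
  qed
  show ?thesis unfolding gs ph using c
    by (simp add: vec_eq_iff forall_3)
qed

end
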